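(* Let $H$ be a GCDs-monoid. Then for every $a\in H$ there exist $b\in H$ and $c\in\mathrm{Sqf}\,H$ such that $a=bc$ and, for every $d\in\mathrm{Sqf}\,H$, if $d\mid a$ then $d\mid c$.
   Context: A monoid means a commutative cancellative monoid (written multiplicatively); $H^{\ast}$ is its unit group. $\mathrm{Sqf}\,H$ is the set of elements of $H$ not of the form $b^2c$ with $b,c\in H$, $b\notin H^{\ast}$. $H$ is a GCDs-monoid if every subset of $H$ has a greatest common divisor in $H$. *)

theory Defs
  imports Main
begin

text \<open>A monoid is a commutative cancellative monoid, written multiplicatively.
  We take the whole type as the monoid H.\<close>

definition cancellative :: "'a::comm_monoid_mult itself \<Rightarrow> bool" where
  "cancellative _ \<longleftrightarrow> (\<forall>a b c :: 'a. a * b = a * c \<longrightarrow> b = c)"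

definition unit_elem :: "'a::comm_monoid_mult \<Rightarrow> bool" where
  "unit_elem u \<longleftrightarrow> (\<exists>v. u * v = 1)"

definition Sqf :: "'a::comm_monoid_mult set" where
  "Sqf = {a. \<not> (\<exists>b c. a = b\<^sup>2 * c \<and> \<not> unit_elem b)}"

definition is_gcd_of :: "'a::comm_monoid_mult \<Rightarrow> 'a set \<Rightarrow> bool" where
  "is_gcd_of d X \<longleftrightarrow> (\<forall>x\<in>X. d dvd x) \<and> (\<forall>e. (\<forall>x\<in>X. e dvd x) \<longrightarrow> e dvd d)"

definition GCDs_monoid :: "'a::comm_monoid_mult itself \<Rightarrow> bool" where
  "GCDs_monoid T \<longleftrightarrow> cancellative T \<and> (\<forall>X :: 'a set. \<exists>d. is_gcd_of d X)"

end

theory Submission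
  imports Defs
begin

lemma dvd_cancel_l:
  fixes x y z :: "'a::comm_monoid_mult"
  assumes canc: "\<forall>a b c :: 'a. a * b = a * c \<longrightarrow> b = c"
    and "x * y dvd x * z"
  shows "y dvd z"
proof -
  from assms(2) obtain m where "x * z = x * y * m" by (auto simp: dvd_def)
  hence "x * z = x * (y * m)" by (simp add: mult.assoc)
  hence "z = y * m" using canc by blast
  thus ?thesis by auto
qed

lemma unit_dvd_elim:
  fixes u b k :: "'a::comm_monoid_mult"
  assumes "u dvd b * k" "unit_elem k"
  shows "u dvd b"
proof -
  from assms(2) obtain v where v: "k * v = 1" by (auto simp: unit_elem_def)
  from assms(1) have "u dvd b * k * v" by simp
  thus ?thesis using v by (simp add: mult.assoc)
qed

lemma euclid:
  fixes u b v :: "'a::comm_monoid_mult"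
  assumes canc: "\<forall>a b c :: 'a. a * b = a * c \<longrightarrow> b = c"
    and gcdex: "\<forall>X::'a set. \<exists>d. is_gcd_of d X"
    and uv: "u dvd b * v" and cop: "\<forall>k. k dvd u \<and> k dvd v \<longrightarrow> unit_elem k"
  shows "u dvd b"
proof -
  obtain D where D: "is_gcd_of D {b*u, b*v}" using gcdex by blast
  have "b dvd D" using D unfolding is_gcd_of_def by auto
  then obtain k where Dk: "D = b * k" by (auto simp: dvd_def)
  have "D dvd b * u" "D dvd b * v" using D unfolding is_gcd_of_def by auto
  hence "b * k dvd b * u" "b * k dvd b * v" using Dk by simp_all
  hence "k dvd u" "k dvd v" using dvd_cancel_l[OF canc] by blast+
  hence ku: "unit_elem k" using cop by blast
  have "u dvd D" using D uv unfolding is_gcd_of_def by auto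
  hence "u dvd b * k" using Dk by simp
  thus ?thesis using ku unit_dvd_elim by blast
qed

lemma key:
  fixes s b e :: "'a::comm_monoid_mult"
  assumes canc: "\<forall>a b c :: 'a. a * b = a * c \<longrightarrow> b = c"
    and gcdex: "\<forall>X::'a set. \<exists>d. is_gcd_of d X"
    and sq: "s \<in> Sqf" and sd: "s dvd b * (b * e)"
  shows "s dvd b * e"
proof -
  obtain g where g: "is_gcd_of g {s, b*e}" using gcdex by blast
  have "g dvd s" "g dvd b * e" using g unfolding is_gcd_of_def by auto
  then obtain u v where su: "s = g * u" and bv: "b * e = g * v" by (auto simp: dvd_def)
  have cop: "\<forall>k. k dvd u \<and> k dvd v \<longrightarrow> unit_elem k"
  proof (intro allI impI)
    fix k assume k: "k dvd u \<and> k dvd v"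
    have "g * k dvd g * u" "g * k dvd g * v" using k by (auto intro: mult_dvd_mono)
    hence "g * k dvd s" "g * k dvd b * e" using su bv by simp_all
    hence "g * k dvd g" using g unfolding is_gcd_of_def by auto
    hence "g * k dvd g * 1" by simp
    hence "k dvd 1" using dvd_cancel_l[OF canc] by blast
    thus "unit_elem k" by (auto simp: unit_elem_def dvd_def)
  qed
  have "g * u dvd g * (b * v)" using sd su bv by (simp add: ac_simps)
  hence "u dvd b * v" using dvd_cancel_l[OF canc] by blast
  hence ub: "u dvd b" by (rule euclid[OF canc gcdex _ cop])
  have "u dvd s" using su by simp
  moreover have "u dvd b * e" using ub by simp
  ultimately have "u dvd g" using g unfolding is_gcd_of_def by auto
  then obtain w where "g = u * w" by (auto simp: dvd_def)
  hence "s = u\<^sup>2 * w" using su by (simp add: power2_eq_square ac_simps)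
  hence uu: "unit_elem u" using sq unfolding Sqf_def by blast
  then obtain u' where u': "u * u' = 1" by (auto simp: unit_elem_def)
  have "b * e = g * u * u' * v" using bv u' by (simp add: mult.assoc)
  hence "b * e = s * (u' * v)" using su by (simp add: ac_simps)
  thus ?thesis by auto
qed

theorem proposition4p5:
  fixes a :: "'a::comm_monoid_mult"
  assumes "GCDs_monoid TYPE('a)"
  shows "\<exists>b c. c \<in> Sqf \<and> a = b * c \<and> (\<forall>d\<in>Sqf. d dvd a \<longrightarrow> d dvd c)"
proof -
  have canc: "\<forall>a b c :: 'a. a * b = a * c \<longrightarrow> b = c"
    and gcdex: "\<forall>X::'a set. \<exists>d. is_gcd_of d X"
    using assms unfolding GCDs_monoid_def cancellative_def by auto
  define S where "S = {s \<in> Sqf. s dvd a}"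
  define M where "M = {m. \<forall>s\<in>S. s dvd m}"
  obtain c where c: "is_gcd_of c M" using gcdex by blast
  have "a \<in> M" unfolding M_def S_def by auto
  hence "c dvd a" using c unfolding is_gcd_of_def by auto
  then obtain b where ab: "a = b * c" by (auto simp: dvd_def mult.commute)
  have allS: "\<forall>d\<in>Sqf. d dvd a \<longrightarrow> d dvd c"
  proof (intro ballI impI)
    fix d assume "d \<in> Sqf" "d dvd a"
    hence "d \<in> S" unfolding S_def by auto
    hence "\<forall>x\<in>M. d dvd x" unfolding M_def by auto
    thus "d dvd c" using c unfolding is_gcd_of_def by auto
  qed
  have "c \<in> Sqf"
  proof (rule ccontr)
    assume "c \<notin> Sqf"
    then obtain \<beta> e where ce: "c = \<beta>\<^sup>2 * e" and nu: "\<not> unit_elem \<beta>"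
      unfolding Sqf_def by auto
    have "\<beta> * e \<in> M" unfolding M_def
    proof (intro CollectI ballI)
      fix s assume "s \<in> S"
      hence "s \<in> Sqf" "s dvd c" using allS unfolding S_def by auto
      moreover have "c = \<beta> * (\<beta> * e)" using ce by (simp add: power2_eq_square mult.assoc)
      ultimately show "s dvd \<beta> * e" using key[OF canc gcdex, of s \<beta> e] by simp
    qed
    hence "c dvd \<beta> * e" using c unfolding is_gcd_of_def by auto
    then obtain k where "\<beta> * e = \<beta>\<^sup>2 * e * k" using ce by (auto simp: dvd_def)
    moreover have "(\<beta> * e) * (\<beta> * k) = \<beta>\<^sup>2 * e * k" by (simp add: power2_eq_square ac_simps)
    ultimately have "(\<beta> * e) * 1 = (\<beta> * e) * (\<beta> * k)" by simp
    hence "1 = \<beta> * k" using canc by blast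
    hence "unit_elem \<beta>" unfolding unit_elem_def by (intro exI[of _ k]) simp
    thus False using nu by simp
  qed
  thus ?thesis using ab allS by blast
qed

end
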